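(* Let $a=\frac{1+\sqrt{5}}{2}$ and $b=a^2=a+1$, and write $a_n=[an]$ and $b_n=[bn]$. Then the series $$\sum_{n=1}^\infty \left(\frac{a_{n+1}}{a_n}-\frac{b_{n+1}}{b_n}\right)$$ converges.
   Context: $[x]$ denotes the greatest integer not exceeding $x$. *)

theory Defs
  imports Complex_Main
begin

end

theory Submission
  imports Defs "HOL-Analysis.Analysis"
begin

lemma key:
  fixes a b m e e' A A' :: real
  assumes a1: "a > 1" and bb: "b = a + 1" and m1: "m \<ge> 1"
    and e0: "0 \<le> e" "e < 1" and e'0: "0 \<le> e'" "e' < 1"
    and AA: "A = a*m - e" and AA': "A' = a*(m+1) - e'" and Am: "A \<ge> m"
  shows "\<bar>A'/A - (A'+m+1)/(A+m) - (e/m - e'/(m+1))/(a*b)\<bar>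
           \<le> (3/2 + (a+b+1)/(2*(a*b))) / m^2"
proof -
  define B where "B = A + m"
  define c where "c = 1/(a*b)"
  have mp: "m > 0" using m1 by simp
  have Ap: "A > 0" using Am mp by simp
  have Bp: "B \<ge> 2*m" using Am B_def by simp
  have ABp: "A*B \<ge> 2*m^2"
  proof -
    have "A*B \<ge> m*(2*m)" using Am Bp mp by (intro mult_mono) auto
    thus ?thesis by (simp add: power2_eq_square)
  qed
  have apos: "a > 0" and bpos: "b > 0" using a1 bb by auto
  have Bpos: "B > 0" using Bp mp by simp
  have ABpos: "A*B > 0" using ABp mp by (smt (verit) zero_less_power)
  have abp: "a*b > 1" proof -
    have "a*b \<ge> 1*2" using a1 bb by (intro mult_mono) auto
    thus ?thesis by simp
  qed
  have f: "A'/A - (A'+m+1)/(A+m) = (m*(e-e') + e)/(A*B)"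
    using Ap mp unfolding B_def AA' by (simp add: field_simps AA)
  have split: "A'/A - (A'+m+1)/(A+m) - (e/m - e'/(m+1))/(a*b)
     = (e-e')*(m/(A*B) - c/m) + e/(A*B) - c*e'*(1/m - 1/(m+1))"
  proof -
    have "(e/m - e'/(m+1))/(a*b) = c*(e/m - e'/(m+1))" unfolding c_def by simp
    moreover have "(m*(e-e') + e)/(A*B) - c*(e/m - e'/(m+1))
       = (e-e')*(m/(A*B) - c/m) + e/(A*B) - c*e'*(1/m - 1/(m+1))"
      using mp Ap Bp by (simp add: divide_simps) (simp add: algebra_simps)
    ultimately show ?thesis unfolding f by simp
  qed
  have t2: "\<bar>e/(A*B)\<bar> \<le> 1/(2*m^2)"
  proof -
    have "\<bar>e/(A*B)\<bar> = e/(A*B)" using e0 ABpos by simp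
    also have "\<dots> \<le> 1/(A*B)" using e0 ABpos by (intro divide_right_mono) auto
    also have "\<dots> \<le> 1/(2*m^2)" using ABp ABpos mp by (intro divide_left_mono) auto
    finally show ?thesis .
  qed
  have cle: "0 < c" "c \<le> 1" using abp c_def by auto
  have t3: "\<bar>c*e'*(1/m - 1/(m+1))\<bar> \<le> 1/m^2"
  proof -
    have d: "1/m - 1/(m+1) = 1/(m*(m+1))" using mp by (simp add: field_simps)
    have "\<bar>c*e'*(1/m - 1/(m+1))\<bar> = c*e'*(1/(m*(m+1)))" unfolding d using cle e'0 mp by simp
    also have "\<dots> \<le> 1*1*(1/(m*(m+1)))" using cle e'0 mp
      by (intro mult_mono) auto
    also have "\<dots> \<le> 1/m^2" using mp by (simp add: power2_eq_square divide_simps)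
    finally show ?thesis .
  qed
  have num: "\<bar>a*b*m^2 - A*B\<bar> \<le> (a+b+1)*m"
  proof -
    have "A*B = a*b*m^2 - e*(a+b)*m + e^2"
      unfolding B_def AA bb by (simp add: algebra_simps power2_eq_square)
    hence "a*b*m^2 - A*B = e*(a+b)*m - e^2" by simp
    moreover have "e*(a+b)*m \<le> (a+b)*m" using e0 a1 bb mp
      by (intro mult_right_mono) (auto intro: mult_left_le_one_le)
    moreover have "e*(a+b)*m \<ge> 0" using e0 a1 bb mp by auto
    moreover have "e^2 \<le> 1" "e^2 \<ge> 0" using e0 by (auto simp: power_le_one)
    moreover have "(a+b+1)*m = (a+b)*m + m" by (simp add: algebra_simps)
    ultimately show ?thesis using mp m1 unfolding abs_le_iff by linarith
  qed
  have t1: "\<bar>m/(A*B) - c/m\<bar> \<le> (a+b+1)/(2*(a*b))/m^2"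
  proof -
    have eq: "m/(A*B) - c/m = (a*b*m^2 - A*B)/(a*b*m*(A*B))"
      unfolding c_def using mp Ap Bpos apos bpos by (simp add: field_simps power2_eq_square)
    have "\<bar>m/(A*B) - c/m\<bar> = \<bar>a*b*m^2 - A*B\<bar>/(a*b*m*(A*B))"
      unfolding eq using mp Ap Bpos apos bpos by (simp add: abs_divide abs_mult)
    also have "\<dots> \<le> ((a+b+1)*m)/(a*b*m*(2*m^2))"
      using num mp ABp ABpos apos bpos by (intro frac_le) (auto intro!: mult_left_mono)
    also have "\<dots> = (a+b+1)/(2*(a*b))/m^2" using mp apos bpos by (simp add: field_simps power2_eq_square)
    finally show ?thesis .
  qed
  have t1': "\<bar>(e-e')*(m/(A*B) - c/m)\<bar> \<le> (a+b+1)/(2*(a*b))/m^2"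
  proof -
    have "\<bar>e-e'\<bar> \<le> 1" using e0 e'0 by auto
    hence "\<bar>(e-e')*(m/(A*B) - c/m)\<bar> \<le> 1 * ((a+b+1)/(2*(a*b))/m^2)"
      unfolding abs_mult using t1 by (intro mult_mono) auto
    thus ?thesis by simp
  qed
  have "\<bar>A'/A - (A'+m+1)/(A+m) - (e/m - e'/(m+1))/(a*b)\<bar>
        \<le> (a+b+1)/(2*(a*b))/m^2 + 1/(2*m^2) + 1/m^2"
    unfolding split using t1' t2 t3 unfolding abs_le_iff by linarith
  also have "\<dots> = (3/2 + (a+b+1)/(2*(a*b))) / m^2" using mp apos bpos by (simp add: field_simps)
  finally show ?thesis .
qed


theorem theorem1:
  fixes a b :: real and an bn :: "nat \<Rightarrow> real"
  assumes "a = (1 + sqrt 5) / 2"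
    and "b = a\<^sup>2"
    and "\<And>n. an n = of_int \<lfloor>a * real n\<rfloor>"
    and "\<And>n. bn n = of_int \<lfloor>b * real n\<rfloor>"
  shows "summable (\<lambda>n. an (n + 2) / an (n + 1) - bn (n + 2) / bn (n + 1))"
proof -
  obtain r where r: "r = sqrt (5::real)" by simp
  have s5: "1 < r" unfolding r by (simp add: real_less_rsqrt)
  have s2: "r^2 = 5" unfolding r by simp
  have a2: "2*a = 1+r" using assms(1) r by simp
  then have a1: "a > 1" using s5 by linarith
  have "(2*a)^2 = 1 + 2*r + r^2" unfolding a2 by (simp add: power2_eq_square algebra_simps)
  moreover have "4*a^2 = (2*a)^2" by (simp add: power_mult_distrib)
  ultimately have "4*a^2 = 4*a + 4" using s2 a2 by linarith
  hence bb: "b = a + 1" unfolding assms(2) by simp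
  have apos: "a > 0" and bpos: "b > 0" using a1 bb by auto
  define e where "e k = a * real k - of_int \<lfloor>a * real k\<rfloor>" for k :: nat
  have e0: "0 \<le> e k" "e k < 1" for k unfolding e_def by linarith+
  have anE: "an k = a * real k - e k" for k unfolding e_def assms(3) by simp
  have bnE: "bn k = an k + real k" for k
  proof -
    have bk: "b * real k = a * real k + of_int (int k)" unfolding bb by (simp add: distrib_right)
    have "\<lfloor>b * real k\<rfloor> = \<lfloor>a * real k + of_int (int k)\<rfloor>" by (simp only: bk)
    also have "\<dots> = \<lfloor>a * real k\<rfloor> + int k" by (rule floor_add_int[symmetric])
    finally show ?thesis unfolding assms(3) assms(4) by simp
  qed
  have anm: "an k \<ge> real k" for k
  proof -
    have "a * real k \<ge> real k" using a1 mult_right_mono[of 1 a "real k"] by simp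
    hence "\<lfloor>a * real k\<rfloor> \<ge> \<lfloor>real k\<rfloor>" by (rule floor_mono)
    thus ?thesis unfolding assms(3) by simp
  qed
  define T where "T n = e (n+1) / real (n+1)" for n
  define K where "K = 3/2 + (a+b+1)/(2*(a*b))"
  define f where "f n = an (n + 2) / an (n + 1) - bn (n + 2) / bn (n + 1)" for n
  define g where "g n = f n - (T n - T (Suc n))/(a*b)" for n
  have gb: "norm (g n) \<le> K * (1 / (real n + 1)^2)" for n
  proof -
    have k: "\<bar>an (n+2)/an (n+1) - (an (n+2)+real (n+1)+1)/(an (n+1)+real (n+1))
       - (e (n+1)/real (n+1) - e (n+2)/(real (n+1)+1))/(a*b)\<bar> \<le> K / (real (n+1))^2"
      unfolding K_def
    proof (rule key[OF a1 bb _ e0 e0 anE])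
      show "real (n+1) \<ge> 1" by simp
      show "an (n+2) = a * (real (n+1) + 1) - e (n+2)" unfolding anE by (simp add: algebra_simps)
      show "an (n+1) \<ge> real (n+1)" by (rule anm)
    qed
    have "g n = an (n+2)/an (n+1) - (an (n+2)+real (n+1)+1)/(an (n+1)+real (n+1))
       - (e (n+1)/real (n+1) - e (n+2)/(real (n+1)+1))/(a*b)"
      unfolding g_def f_def T_def bnE by (simp add: algebra_simps numeral_2_eq_2)
    thus ?thesis using k by (simp add: add.commute)
  qed
  have sK: "summable (\<lambda>n. K * (1 / (real n + 1)^2))"
    using inverse_squares_sums by (intro summable_mult) (auto simp: sums_iff add.commute)
  have sg: "summable g"
    by (rule summable_comparison_test'[OF sK]) (use gb in auto)
  have T0: "T \<longlonglongrightarrow> 0"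
  proof (rule Lim_null_comparison[OF _ LIMSEQ_inverse_real_of_nat])
    show "\<forall>\<^sub>F n in sequentially. norm (T n) \<le> inverse (real (Suc n))"
    proof (intro always_eventually allI)
      fix n
      have "norm (T n) = e (n+1) / real (n+1)" unfolding T_def using e0 by simp
      also have "\<dots> \<le> 1 / real (n+1)" using e0 by (intro divide_right_mono) (auto intro: less_imp_le)
      finally show "norm (T n) \<le> inverse (real (Suc n))" by (simp add: inverse_eq_divide)
    qed
  qed
  have sh: "summable (\<lambda>n. (T n - T (Suc n))/(a*b))"
    by (intro summable_divide telescope_summable'[OF T0])
  have "summable (\<lambda>n. g n + (T n - T (Suc n))/(a*b))" by (rule summable_add[OF sg sh])
  moreover have "(\<lambda>n. g n + (T n - T (Suc n))/(a*b)) = f" unfolding g_def by auto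
  ultimately show ?thesis unfolding f_def by simp
qed

end
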